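(* Let $p>2$ be a prime and $g$ a generator of $U(\mathbb Z/p\mathbb Z)$. Let $\beta_1\in\mathbb R$ and $\beta_2>0$, let $\varphi=\cos\frac{2\pi}{p-1}+i\sin\frac{2\pi}{p-1}$ and $\tau=\cos\frac{2\pi}{p}+i\sin\frac{2\pi}{p}$, and consider the lists $$\Sigma=(\beta_1,\beta_2,\beta_2\varphi,\beta_2\varphi^2,\dots,\beta_2\varphi^{p-2}),\qquad \Sigma'=(\beta_1,\beta_2\tau,\beta_2\tau^2,\dots,\beta_2\tau^{p-1}).$$ If $C=circ(c_1,\dots,c_p)$ is the real circulant matrix whose eigenvalues $\lambda_k=\sum_{\ell=1}^p c_\ell\tau^{(k-1)(\ell-1)}$, $1\le k\le p$, are the components of $\Sigma'$ in this order, then $A=Q_gC$ is a real $g$-circulant matrix whose eigenvalues can be ordered as the components of $\Sigma$.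
   Context: $circ(c_1,\dots,c_p)$ is the circulant matrix with $(i,j)$ entry $c_{j-i+1}$ (subscripts mod $p$ in $\{1,\dots,p\}$). $Q_g$ is the $p\times p$ permutation matrix whose $(i,j)$ entry is $1$ if $j\equiv 1+(i-1)g\pmod p$ and $0$ otherwise. A $g$-circulant matrix is one in which each row is the preceding row cyclically shifted $g$ places to the right. *)

theory Defs
  imports "HOL-Number_Theory.Number_Theory" "Jordan_Normal_Form.Matrix" "Jordan_Normal_Form.Char_Poly"
begin

text \<open>Index i (0-based)
  corresponds to index i+1 of the paper. A coefficient vector (c_1,...,c_p) of the
  paper is represented by c :: nat => 'a with c l = c_(l+1).\<close>

definition circ :: "nat \<Rightarrow> (nat \<Rightarrow> 'a) \<Rightarrow> 'a mat" where
  "circ p c = mat p p (\<lambda>(i, j). c ((j + p - i) mod p))"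

definition Qperm :: "nat \<Rightarrow> nat \<Rightarrow> 'a :: {zero,one} mat" where
  "Qperm p g = mat p p (\<lambda>(i, j). if j mod p = (i * g) mod p then 1 else 0)"

definition g_circulant :: "nat \<Rightarrow> nat \<Rightarrow> 'a mat \<Rightarrow> bool" where
  "g_circulant p g A \<longleftrightarrow> A \<in> carrier_mat p p \<and>
     (\<forall>i j. i + 1 < p \<and> j < p \<longrightarrow> A $$ (i + 1, (j + g) mod p) = A $$ (i, j))"

text \<open>The multiset of eigenvalues (with algebraic multiplicity) of a square complex matrix
  equals the components of a list: the characteristic polynomial factors accordingly.\<close>
definition eigenvalues_are :: "complex mat \<Rightarrow> complex list \<Rightarrow> bool" where
  "eigenvalues_are A xs \<longleftrightarrow> char_poly A = (\<Prod>x\<leftarrow>xs. [:- x, 1:])"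

end

theory Submission
  imports Defs
begin

definition rt :: "nat \<Rightarrow> int \<Rightarrow> complex" where
  "rt N a = cis (2 * pi * of_int a / of_nat N)"

lemma rt_add: "rt N (a + b) = rt N a * rt N b"
  unfolding rt_def cis_mult by (simp add: distrib_left add_divide_distrib)

lemma rt_0[simp]: "rt N 0 = 1"
  by (simp add: rt_def)

lemma rt_nonzero[simp]: "rt N a \<noteq> 0"
  by (simp add: rt_def)

lemma rt_pow: "rt N a ^ n = rt N (a * int n)"
  unfolding rt_def DeMoivre by (simp add: field_simps)

lemma rt_eq_1: assumes "N > 0" shows "rt N a = 1 \<longleftrightarrow> int N dvd a"
proof
  assume "rt N a = 1"
  then have "cos (2 * pi * of_int a / of_nat N) = 1"
    by (simp add: rt_def complex_eq_iff)
  then obtain n :: int where n: "2 * pi * of_int a / of_nat N = n * 2 * pi"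
    using cos_one_2pi_int by (metis mult.commute mult.left_commute of_int_mult of_int_numeral)
  then have "real_of_int a = of_int n * of_nat N" using assms
    by (simp add: field_simps)
  then have "a = n * int N" by (metis of_int_eq_iff of_int_mult of_int_of_nat_eq)
  then show "int N dvd a" by simp
next
  assume "int N dvd a"
  then obtain n where "a = int N * n" by blast
  then have "2 * pi * of_int a / of_nat N = 2 * pi * of_int n" using assms by simp
  then show "rt N a = 1" unfolding rt_def by simp
qed

lemma rt_cong: assumes "N > 0" "a mod int N = b mod int N" shows "rt N a = rt N b"
proof -
  have "int N dvd (a - b)" using assms(2) by (simp add: mod_eq_dvd_iff)
  then have "rt N (a - b) = 1" using rt_eq_1[OF assms(1)] by simp
  then show ?thesis using rt_add[of N "a - b" b] by simp
qed

lemma rt_mod: assumes "N > 0" shows "rt N (a mod int N) = rt N a"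
  by (rule rt_cong[OF assms]) simp

lemma rt_neg: "rt N (- a) * rt N a = 1"
  using rt_add[of N "-a" a] by simp

lemma rt_sum: assumes "N > 0"
  shows "(\<Sum>j<N. rt N (a * int j)) = (if int N dvd a then of_nat N else 0)"
proof (cases "int N dvd a")
  case True
  then have "rt N (a * int j) = 1" for j using rt_eq_1[OF assms] by simp
  then show ?thesis using True by simp
next
  case False
  then have ne: "rt N a \<noteq> 1" using rt_eq_1[OF assms] by simp
  have "rt N a ^ N = 1" unfolding rt_pow using rt_eq_1[OF assms] by simp
  then have "(\<Sum>j<N. rt N a ^ j) = 0" using geometric_sum[OF ne, of N] by simp
  then show ?thesis using False by (simp add: rt_pow)
qed

lemma mod_sub_int: assumes "p > 0"
  shows "int ((j + p - x mod p) mod p) = (int j - int x) mod int p"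
proof -
  have "x mod p < p" using assms by simp
  then have "int (j + p - x mod p) = int j + int p - int (x mod p)" by simp
  then have "int ((j + p - x mod p) mod p) = (int j + int p - int x mod int p) mod int p"
    by (simp add: zmod_int)
  also have "\<dots> = ((int j - int x) + int p) mod int p" by (simp add: mod_simps algebra_simps)
  also have "\<dots> = (int j - int x) mod int p" by simp
  finally show ?thesis .
qed

locale prim =
  fixes p g :: nat
  assumes prime: "prime p" and p2: "p > 2" and proot: "residue_primroot p g"
begin

definition K :: "nat \<Rightarrow> nat" where "K t = g ^ t mod p"
definition S :: "nat \<Rightarrow> nat" where "S t = (\<Sum>s<t. K s)"

lemma p0: "p > 0" using p2 by simp
lemma p1: "p - 1 > 0" using p2 by simp

lemma ord_eq: "ord p g = p - 1"
  using proot prime totient_prime unfolding residue_primroot_def by simp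

lemma cop: "coprime p g" using proot unfolding residue_primroot_def by simp

lemma K_inj: "inj_on K {..<p-1}"
  using inj_power_mod[OF cop] ord_eq unfolding K_def by simp

lemma K_range: "K t \<in> {1..<p}"
proof -
  have "coprime p (g ^ t)" using cop by simp
  then have "\<not> p dvd g ^ t" using prime
    by (metis coprime_absorb_left coprime_commute not_prime_unit)
  then have "K t \<noteq> 0" unfolding K_def by (simp add: dvd_eq_mod_eq_0)
  moreover have "K t < p" unfolding K_def using p0 by simp
  ultimately show ?thesis by auto
qed

lemma K_lt: "K t < p" using K_range by auto
lemma K_pos: "K t > 0" using K_range[of t] by auto

lemma K_image: "K ` {..<p-1} = {1..<p}"
proof (rule card_subset_eq)
  show "K ` {..<p - 1} \<subseteq> {1..<p}" using K_range by auto
  show "card (K ` {..<p - 1}) = card {1..<p}" using card_image[OF K_inj] by simp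
qed simp

lemma K_0: "K 0 = 1" unfolding K_def using p2 by simp

lemma K_last: "K (p - 1) = 1"
proof -
  have "[g ^ (p - 1) = 1] (mod p)" using ord_works[of g p] ord_eq by simp
  then show ?thesis unfolding K_def cong_def using p2 by simp
qed

lemma K_Suc: "K (Suc t) = (K t * g) mod p"
  unfolding K_def by (metis mod_mult_left_eq mult.commute power_Suc)

lemma S_Suc: "S (Suc t) = S t + K t" unfolding S_def by simp

lemma S_last: "int p dvd int (S (p - 1))"
proof -
  have "S (p - 1) = (\<Sum>r\<in>{1..<p}. r)"
  proof -
    have "(\<Sum>r\<in>K ` {..<p-1}. r) = (\<Sum>s<p-1. K s)" using sum.reindex[OF K_inj, of id] by simp
    then show ?thesis unfolding S_def K_image by simp
  qed
  also have "\<dots> = (\<Sum>r=Suc 0..p-1. r)" by (rule sum.cong) auto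
  finally have e: "2 * S (p - 1) = p * (p - 1)" using double_gauss_sum_from_Suc_0[of "p - 1", where 'a=nat] p0
    by simp
  have "odd p" using prime p2 by (metis prime_odd_nat)
  then obtain q where "p - 1 = 2 * q" using p0 by (metis dvd_def odd_two_times_div_two_nat)
  then have "S (p - 1) = p * q" using e by simp
  then show ?thesis by simp
qed

end

locale prim2 = prim +
  fixes c :: "nat \<Rightarrow> complex" and b1 b2 :: complex
  assumes lam0: "(\<Sum>l<p. c l) = b1"
    and lamk: "\<And>k. 0 < k \<Longrightarrow> k < p \<Longrightarrow> (\<Sum>l<p. c l * rt p (int k * int l)) = b2 * rt p (int k)"
begin

definition d :: "nat \<Rightarrow> nat \<Rightarrow> nat" where "d i j = (j + p - i * g mod p) mod p"

lemma d_int: "int (d i j) = (int j - int i * int g) mod int p"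
  unfolding d_def using mod_sub_int[OF p0, of j "i * g"] by simp

lemma d_lt: "d i j < p" unfolding d_def using p0 by simp

lemma d_inv1: "j < p \<Longrightarrow> (d i j + i * g) mod p = j"
proof -
  assume j: "j < p"
  have "int ((d i j + i * g) mod p) = ((int j - int i * int g) mod int p + int i * int g) mod int p"
    by (simp add: zmod_int d_int)
  also have "\<dots> = int j mod int p" by (simp add: mod_simps)
  also have "\<dots> = int j" using j by simp
  finally show ?thesis by simp
qed

lemma d_inv2: "l < p \<Longrightarrow> d i ((l + i * g) mod p) = l"
proof -
  assume l: "l < p"
  have "int (d i ((l + i * g) mod p)) = ((int l + int i * int g) mod int p - int i * int g) mod int p"
    by (simp add: zmod_int d_int)
  also have "\<dots> = int l mod int p" by (simp add: mod_simps)
  also have "\<dots> = int l" using l by simp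
  finally show ?thesis by simp
qed

lemma L1: "(\<Sum>j<p. c (d i j) * rt p (int k * int j)) =
   rt p (int k * int i * int g) * (\<Sum>l<p. c l * rt p (int k * int l))"
proof -
  have 1: "rt p (int k * int i * int g) * (\<Sum>l<p. c l * rt p (int k * int l))
     = (\<Sum>l<p. c l * rt p (int k * int l + int k * int i * int g))"
    by (simp add: sum_distrib_left rt_add algebra_simps)
  have "(\<Sum>j<p. c (d i j) * rt p (int k * int j)) = (\<Sum>l<p. c l * rt p (int k * int l + int k * int i * int g))"
  proof (rule sum.reindex_bij_witness[of _ "\<lambda>l. (l + i * g) mod p" "d i"])
    fix j assume "j \<in> {..<p}"
    then show "(d i j + i * g) mod p = j" using d_inv1 by simp
    show "d i j \<in> {..<p}" using d_lt by simp
    have "(int k * int (d i j) + int k * int i * int g) mod int p = (int k * int j) mod int p"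
    proof -
      have "(int k * ((int j - int i * int g) mod int p) + int k * int i * int g) mod int p
          = (int k * (int j - int i * int g) + int k * int i * int g) mod int p"
        by (metis mod_add_left_eq mod_mult_right_eq)
      also have "\<dots> = (int k * int j) mod int p" by (simp add: algebra_simps)
      finally show ?thesis unfolding d_int .
    qed
    then show "c (d i j) * rt p (int k * int (d i j) + int k * int i * int g) = c (d i j) * rt p (int k * int j)"
      using rt_cong[OF p0] by metis
  next
    fix l assume "l \<in> {..<p}"
    then show "d i ((l + i * g) mod p) = l" using d_inv2 by simp
    show "(l + i * g) mod p \<in> {..<p}" using p0 by simp
  qed
  then show ?thesis using 1 by simp
qed

end

context prim2 begin

definition vb :: "nat \<Rightarrow> nat \<Rightarrow> complex" where
  "vb m j = (\<Sum>t<p-1. rt (p-1) (- int m * int t) * rt p (int (S t) + int (K t) * int j))"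

lemma shift_sum: assumes "h n = h 0" shows "(\<Sum>t<n. h (Suc t)) = (\<Sum>t<n. (h t :: complex))"
proof -
  have "(\<Sum>t<Suc n. h t) = h 0 + (\<Sum>t<n. h (Suc t))" by (rule sum.lessThan_Suc_shift)
  moreover have "(\<Sum>t<Suc n. h t) = (\<Sum>t<n. h t) + h n" by simp
  ultimately show ?thesis using assms by simp
qed

lemma AP: assumes i: "i < p"
  shows "(\<Sum>j<p. c (d i j) * vb m j) = b2 * rt (p-1) (int m) * vb m i"
proof -
  define X where "X t = rt (p-1) (- int m * int t)" for t
  have "(\<Sum>j<p. c (d i j) * vb m j)
      = (\<Sum>j<p. \<Sum>t<p-1. X t * rt p (int (S t)) * (c (d i j) * rt p (int (K t) * int j)))"
    unfolding vb_def X_def by (simp add: sum_distrib_left rt_add mult_ac)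
  also have "\<dots> = (\<Sum>t<p-1. X t * rt p (int (S t)) * (\<Sum>j<p. c (d i j) * rt p (int (K t) * int j)))"
    by (subst sum.swap) (simp add: sum_distrib_left)
  also have "\<dots> = (\<Sum>t<p-1. X t * rt p (int (S t)) * (rt p (int (K t) * int i * int g) * (b2 * rt p (int (K t)))))"
    by (simp add: L1 lamk K_pos K_lt)
  also have "\<dots> = b2 * (\<Sum>t<p-1. X t * rt p (int (S t) + int (K t) + int (K t) * int i * int g))"
    by (simp add: sum_distrib_left rt_add mult_ac)
  also have "\<dots> = b2 * (\<Sum>t<p-1. rt (p-1) (int m) * (rt (p-1) (- int m * int (Suc t)) * rt p (int (S (Suc t)) + int (K (Suc t)) * int i)))"
  proof -
    have "X t * rt p (int (S t) + int (K t) + int (K t) * int i * int g)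
      = rt (p-1) (int m) * (rt (p-1) (- int m * int (Suc t)) * rt p (int (S (Suc t)) + int (K (Suc t)) * int i))" for t
    proof -
      have "X t = rt (p-1) (int m) * rt (p-1) (- int m * int (Suc t))"
        unfolding X_def rt_add[symmetric] by (simp add: algebra_simps)
      moreover have "rt p (int (S t) + int (K t) + int (K t) * int i * int g) = rt p (int (S (Suc t)) + int (K (Suc t)) * int i)"
      proof (rule rt_cong[OF p0])
        have "int (K (Suc t)) = (int (K t) * int g) mod int p" unfolding K_Suc by (simp add: zmod_int)
        then have "(int (S (Suc t)) + int (K (Suc t)) * int i) mod int p
            = (int (S t) + int (K t) + ((int (K t) * int g) mod int p) * int i) mod int p"
          by (simp add: S_Suc)
        also have "\<dots> = (int (S t) + int (K t) + (int (K t) * int g) * int i) mod int p"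
          by (metis mod_add_right_eq mod_mult_left_eq)
        finally show "(int (S t) + int (K t) + int (K t) * int i * int g) mod int p = (int (S (Suc t)) + int (K (Suc t)) * int i) mod int p"
          by (simp add: algebra_simps)
      qed
      ultimately show ?thesis by simp
    qed
    then show ?thesis by simp
  qed
  also have "\<dots> = b2 * rt (p-1) (int m) * (\<Sum>t<p-1. (\<lambda>t. rt (p-1) (- int m * int t) * rt p (int (S t) + int (K t) * int i)) (Suc t))"
    by (simp add: sum_distrib_left mult_ac)
  also have "\<dots> = b2 * rt (p-1) (int m) * vb m i"
    unfolding vb_def
  proof (subst shift_sum)
    have 1: "rt (p-1) (- int m * int (p - 1)) = 1" using rt_eq_1[OF p1] by simp
    have 2: "rt p (int (S (p-1)) + int i) = rt p (int i)"
      using rt_cong[OF p0] S_last by (metis mod_add_left_eq dvd_imp_mod_0 add_0)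
    show "rt (p-1) (- int m * int (p - 1)) * rt p (int (S (p - 1)) + int (K (p - 1)) * int i) =
      rt (p-1) (- int m * int 0) * rt p (int (S 0) + int (K 0) * int i)"
    proof -
      have "S 0 = 0" unfolding S_def by simp
      then show ?thesis using K_last K_0 1 2 by (simp del: of_nat_diff)
    qed
  qed simp
  finally show ?thesis .
qed

end

context prim2 begin

definition qv :: "nat \<Rightarrow> nat \<Rightarrow> complex" where
  "qv a j = (\<Sum>t<p-1. rt (p-1) (int a * int t) * rt p (- int (S t) - int (K t) * int j))"

lemma Kdvd: "int p dvd (int (K s) - int (K t)) \<longleftrightarrow> K s = K t"
proof
  assume "int p dvd (int (K s) - int (K t))"
  then have "int (K s) mod int p = int (K t) mod int p" by (simp add: mod_eq_dvd_iff)
  then show "K s = K t" using K_lt[of s] K_lt[of t] by simp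
qed simp

lemma vb_alt: "vb m j = (\<Sum>t<p-1. (rt (p-1) (- int m * int t) * rt p (int (S t))) * rt p (int (K t) * int j))"
  unfolding vb_def by (intro sum.cong refl) (simp only: rt_add mult.assoc)

lemma qv_alt: "qv a j = (\<Sum>t<p-1. (rt (p-1) (int a * int t) * rt p (- int (S t))) * rt p (- int (K t) * int j))"
  unfolding qv_def
proof (intro sum.cong refl)
  fix t
  have "- int (S t) - int (K t) * int j = - int (S t) + (- int (K t) * int j)" by simp
  then show "rt (p-1) (int a * int t) * rt p (- int (S t) - int (K t) * int j) =
     (rt (p-1) (int a * int t) * rt p (- int (S t))) * rt p (- int (K t) * int j)"
    by (simp only: rt_add mult.assoc)
qed

lemma swap_fact: "(\<Sum>j<p. \<Sum>t<p-1. A t * B t j) = (\<Sum>t<p-1. A t * (\<Sum>j<p. B t j :: complex))"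
  by (subst sum.swap) (simp only: sum_distrib_left)

lemma QP1: "(\<Sum>j<p. vb m j) = 0"
proof -
  have "(\<Sum>j<p. vb m j) = (\<Sum>t<p-1. (rt (p-1) (- int m * int t) * rt p (int (S t))) * (\<Sum>j<p. rt p (int (K t) * int j)))"
    unfolding vb_alt by (rule swap_fact)
  also have "\<dots> = 0"
  proof (rule sum.neutral, intro ballI)
    fix t
    have "\<not> int p dvd int (K t)" using K_pos[of t] K_lt[of t]
      by (metis int_dvd_int_iff nat_dvd_not_less)
    then show "(rt (p-1) (- int m * int t) * rt p (int (S t))) * (\<Sum>j<p. rt p (int (K t) * int j)) = 0"
      using rt_sum[OF p0, of "int (K t)"] by simp
  qed
  finally show ?thesis .
qed

lemma QP2: "(\<Sum>j<p. qv a j) = 0"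
proof -
  have "(\<Sum>j<p. qv a j) = (\<Sum>t<p-1. (rt (p-1) (int a * int t) * rt p (- int (S t))) * (\<Sum>j<p. rt p (- int (K t) * int j)))"
    unfolding qv_alt by (rule swap_fact)
  also have "\<dots> = 0"
  proof (rule sum.neutral, intro ballI)
    fix t
    have "\<not> int p dvd - int (K t)" using K_pos[of t] K_lt[of t]
      by (metis dvd_minus_iff int_dvd_int_iff nat_dvd_not_less)
    then show "(rt (p-1) (int a * int t) * rt p (- int (S t))) * (\<Sum>j<p. rt p (- int (K t) * int j)) = 0"
      using rt_sum[OF p0, of "- int (K t)"] by simp
  qed
  finally show ?thesis .
qed

end

context prim2 begin

lemma triple: "(\<Sum>j<N. (\<Sum>t<n. A t * U t j) * (\<Sum>s<n. B s * V s j)) =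
   (\<Sum>t<n. \<Sum>s<n. (A t * B s) * (\<Sum>j<N. U t j * V s j :: complex))"
proof -
  have "(\<Sum>t<n. A t * U t j) * (\<Sum>s<n. B s * V s j) = (\<Sum>t<n. \<Sum>s<n. (A t * B s) * (U t j * V s j))" for j
    by (simp add: sum_product mult_ac)
  then have "(\<Sum>j<N. (\<Sum>t<n. A t * U t j) * (\<Sum>s<n. B s * V s j)) = (\<Sum>j<N. \<Sum>t<n. \<Sum>s<n. (A t * B s) * (U t j * V s j))"
    by simp
  also have "\<dots> = (\<Sum>t<n. \<Sum>j<N. \<Sum>s<n. (A t * B s) * (U t j * V s j))" by (rule sum.swap)
  also have "\<dots> = (\<Sum>t<n. \<Sum>s<n. \<Sum>j<N. (A t * B s) * (U t j * V s j))"
    by (rule sum.cong[OF refl], rule sum.swap)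
  also have "\<dots> = (\<Sum>t<n. \<Sum>s<n. (A t * B s) * (\<Sum>j<N. U t j * V s j))"
    by (simp only: sum_distrib_left)
  finally show ?thesis .
qed

lemma QP3: assumes a: "a < p - 1" and m: "m < p - 1"
  shows "(\<Sum>j<p. qv a j * vb m j) = (if a = m then of_nat p * of_nat (p - 1) else 0)"
proof -
  define A where "A t = rt (p-1) (int a * int t) * rt p (- int (S t))" for t
  define B where "B s = rt (p-1) (- int m * int s) * rt p (int (S s))" for s
  have "(\<Sum>j<p. qv a j * vb m j) = (\<Sum>t<p-1. \<Sum>s<p-1. (A t * B s) * (\<Sum>j<p. rt p (- int (K t) * int j) * rt p (int (K s) * int j)))"
    unfolding qv_alt vb_alt A_def B_def by (rule triple)
  also have "\<dots> = (\<Sum>t<p-1. \<Sum>s<p-1. if s = t then A t * B t * of_nat p else 0)"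
  proof (intro sum.cong refl)
    fix t s assume "t \<in> {..<p-1}" "s \<in> {..<p-1}"
    then have e: "K s = K t \<longleftrightarrow> s = t" using K_inj by (auto dest: inj_onD)
    have "rt p (- int (K t) * int j) * rt p (int (K s) * int j) = rt p ((int (K s) - int (K t)) * int j)" for j
      by (simp add: rt_add[symmetric] algebra_simps)
    then have "(\<Sum>j<p. rt p (- int (K t) * int j) * rt p (int (K s) * int j)) = (if s = t then of_nat p else 0)"
      using rt_sum[OF p0, of "int (K s) - int (K t)"] Kdvd[of s t] e by simp
    then show "(A t * B s) * (\<Sum>j<p. rt p (- int (K t) * int j) * rt p (int (K s) * int j)) = (if s = t then A t * B t * of_nat p else 0)"
      by simp
  qed
  also have "\<dots> = (\<Sum>t<p-1. A t * B t * of_nat p)"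
    by (simp add: sum.delta)
  also have "\<dots> = of_nat p * (\<Sum>t<p-1. rt (p-1) ((int a - int m) * int t))"
  proof -
    have "A t * B t = rt (p-1) ((int a - int m) * int t)" for t
    proof -
      have "A t * B t = (rt (p-1) (int a * int t) * rt (p-1) (- int m * int t)) * (rt p (- int (S t)) * rt p (int (S t)))"
        unfolding A_def B_def by (simp only: mult_ac)
      also have "\<dots> = rt (p-1) ((int a - int m) * int t)"
        by (simp add: rt_add[symmetric] algebra_simps)
      finally show ?thesis .
    qed
    then show ?thesis by (simp add: sum_distrib_left mult_ac)
  qed
  also have "\<dots> = (if a = m then of_nat p * of_nat (p - 1) else 0)"
  proof -
    have "int (p - 1) dvd (int a - int m) \<longleftrightarrow> a = m"
    proof
      assume "int (p - 1) dvd (int a - int m)"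
      then have "int a mod int (p-1) = int m mod int (p-1)" by (simp add: mod_eq_dvd_iff)
      then show "a = m" using a m by simp
    qed simp
    then show ?thesis using rt_sum[OF p1, of "int a - int m"] by simp
  qed
  finally show ?thesis .
qed

end

lemma mult_entry: assumes "X \<in> carrier_mat n n" "Y \<in> carrier_mat n n" "a < n" "b < n"
  shows "(X * Y) $$ (a, b) = (\<Sum>j<n. X $$ (a, j) * Y $$ (j, b))"
  using assms by (auto simp: scalar_prod_def lessThan_atLeast0 intro!: sum.cong)

context prim2 begin

definition Pm :: "complex mat" where
  "Pm = mat p p (\<lambda>(j, b). if b = 0 then 1 else vb (b - 1) j)"
definition Qm :: "complex mat" where
  "Qm = mat p p (\<lambda>(a, j). if a = 0 then 1 / of_nat p else qv (a - 1) j / (of_nat p * of_nat (p - 1)))"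
definition Dm :: "complex mat" where
  "Dm = mat p p (\<lambda>(i, j). if i = j then (if i = 0 then b1 else b2 * rt (p - 1) (int i - 1)) else 0)"
definition Am :: "complex mat" where
  "Am = mat p p (\<lambda>(i, j). c (d i j))"

lemma carr: "Pm \<in> carrier_mat p p" "Qm \<in> carrier_mat p p" "Dm \<in> carrier_mat p p" "Am \<in> carrier_mat p p"
  unfolding Pm_def Qm_def Dm_def Am_def by auto

lemma QmPm: "Qm * Pm = 1\<^sub>m p"
proof (rule eq_matI)
  fix a b assume "a < dim_row (1\<^sub>m p :: complex mat)" "b < dim_col (1\<^sub>m p :: complex mat)"
  then have ab: "a < p" "b < p" by auto
  have e: "(Qm * Pm) $$ (a, b) = (\<Sum>j<p. Qm $$ (a, j) * Pm $$ (j, b))"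
    by (rule mult_entry[OF carr(2) carr(1) ab])
  have pp: "of_nat p \<noteq> (0::complex)" "of_nat (p - 1) \<noteq> (0::complex)" using p0 p1 by auto
  show "(Qm * Pm) $$ (a, b) = 1\<^sub>m p $$ (a, b)"
  proof (cases "a = 0")
    case True
    show ?thesis
    proof (cases "b = 0")
      case True
      then show ?thesis using \<open>a = 0\<close> e ab pp by (simp add: Qm_def Pm_def)
    next
      case False
      have "(\<Sum>j<p. Qm $$ (a, j) * Pm $$ (j, b)) = (\<Sum>j<p. vb (b - 1) j) / of_nat p"
        using \<open>a = 0\<close> False ab by (simp add: Qm_def Pm_def sum_divide_distrib)
      then show ?thesis using e QP1 False \<open>a = 0\<close> ab by simp
    qed
  next
    case False
    show ?thesis
    proof (cases "b = 0")
      case True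
      have "(\<Sum>j<p. Qm $$ (a, j) * Pm $$ (j, b)) = (\<Sum>j<p. qv (a - 1) j) / (of_nat p * of_nat (p - 1))"
        using \<open>a \<noteq> 0\<close> True ab by (simp add: Qm_def Pm_def sum_divide_distrib)
      then show ?thesis using e QP2 True \<open>a \<noteq> 0\<close> ab by simp
    next
      case False
      have "(\<Sum>j<p. Qm $$ (a, j) * Pm $$ (j, b)) = (\<Sum>j<p. qv (a - 1) j * vb (b - 1) j) / (of_nat p * of_nat (p - 1))"
        using \<open>a \<noteq> 0\<close> False ab by (simp add: Qm_def Pm_def sum_divide_distrib)
      also have "\<dots> = (if a - 1 = b - 1 then 1 else 0)"
        using QP3[of "a - 1" "b - 1"] ab \<open>a \<noteq> 0\<close> False pp by simp
      finally show ?thesis using e \<open>a \<noteq> 0\<close> False ab by auto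
    qed
  qed
qed (use carr in auto)

lemma AmPm: "Am * Pm = Pm * Dm"
proof (rule eq_matI)
  fix i b assume "i < dim_row (Pm * Dm)" "b < dim_col (Pm * Dm)"
  then have ib: "i < p" "b < p" using carr by auto
  have "(Pm * Dm) $$ (i, b) = (\<Sum>j<p. Pm $$ (i, j) * Dm $$ (j, b))"
    by (rule mult_entry[OF carr(1) carr(3) ib])
  also have "\<dots> = (\<Sum>j<p. if j = b then Pm $$ (i, b) * Dm $$ (b, b) else 0)"
    by (rule sum.cong) (auto simp: Dm_def ib)
  also have "\<dots> = Pm $$ (i, b) * Dm $$ (b, b)" using ib by simp
  finally have r: "(Pm * Dm) $$ (i, b) = Pm $$ (i, b) * Dm $$ (b, b)" .
  have l: "(Am * Pm) $$ (i, b) = (\<Sum>j<p. c (d i j) * Pm $$ (j, b))"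
    using mult_entry[OF carr(4) carr(1) ib] ib by (simp add: Am_def)
  show "(Am * Pm) $$ (i, b) = (Pm * Dm) $$ (i, b)"
  proof (cases "b = 0")
    case True
    have "(\<Sum>j<p. c (d i j)) = b1" using L1[of i 0] lam0 by simp
    then show ?thesis using l r True ib by (simp add: Pm_def Dm_def)
  next
    case False
    have "(\<Sum>j<p. c (d i j) * Pm $$ (j, b)) = (\<Sum>j<p. c (d i j) * vb (b - 1) j)"
      using False ib by (simp add: Pm_def)
    also have "\<dots> = b2 * rt (p-1) (int (b - 1)) * vb (b - 1) i" by (rule AP[OF ib(1)])
    finally show ?thesis using l r False ib by (simp add: Pm_def Dm_def of_nat_diff mult_ac)
  qed
qed (use carr in auto)

lemma similar: "similar_mat Am Dm"
proof -
  have PQ: "Pm * Qm = 1\<^sub>m p" by (rule mat_mult_left_right_inverse[OF carr(2) carr(1) QmPm])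
  have "Am = Am * (Pm * Qm)" using PQ carr by simp
  also have "\<dots> = (Am * Pm) * Qm" using carr by (simp add: assoc_mult_mat)
  also have "\<dots> = Pm * Dm * Qm" using AmPm by simp
  finally show ?thesis
    by (intro similar_matI[where P=Pm and Q=Qm and n=p]) (use carr PQ QmPm in auto)
qed

lemma charpoly: "char_poly Am = (\<Prod>x\<leftarrow>(b1 # map (\<lambda>m. b2 * rt (p-1) (int m)) [0..<p-1]). [:- x, 1:])"
proof -
  have "char_poly Am = char_poly Dm" by (rule char_poly_similar[OF similar])
  also have "\<dots> = (\<Prod>a\<leftarrow>diag_mat Dm. [:- a, 1:])"
    by (rule char_poly_upper_triangular[OF carr(3)]) (auto simp: upper_triangular_def Dm_def)
  also have "diag_mat Dm = b1 # map (\<lambda>m. b2 * rt (p-1) (int m)) [0..<p-1]"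
  proof (rule nth_equalityI)
    show "length (diag_mat Dm) = length (b1 # map (\<lambda>m. b2 * rt (p-1) (int m)) [0..<p-1])"
      using p0 by (simp add: diag_mat_def Dm_def)
    fix i assume "i < length (diag_mat Dm)"
    then have i: "i < p" by (simp add: diag_mat_def Dm_def)
    show "diag_mat Dm ! i = (b1 # map (\<lambda>m. b2 * rt (p-1) (int m)) [0..<p-1]) ! i"
    proof (cases i)
      case 0 then show ?thesis using i by (simp add: diag_mat_def Dm_def)
    next
      case (Suc k)
      then have "k < p - 1" using i by simp
      then show ?thesis using i Suc by (simp add: diag_mat_def Dm_def)
    qed
  qed
  finally show ?thesis .
qed

end

lemma cis_rt: "cis (2 * pi / real N) ^ n = rt N (int n)"
  unfolding rt_def DeMoivre by (simp add: field_simps)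

lemma QC_entry: assumes "p > 0" "i < p" "j < p"
  shows "(Qperm p g * circ p c :: 'a::comm_ring_1 mat) $$ (i, j) = c ((j + p - i * g mod p) mod p)"
proof -
  have "(Qperm p g * circ p c :: 'a mat) $$ (i, j) = (\<Sum>l<p. (Qperm p g :: 'a mat) $$ (i, l) * circ p c $$ (l, j))"
    by (rule mult_entry) (auto simp: Qperm_def circ_def assms)
  also have "\<dots> = (\<Sum>l<p. if l = i * g mod p then c ((j + p - i * g mod p) mod p) else 0)"
    by (rule sum.cong) (auto simp: Qperm_def circ_def assms)
  also have "\<dots> = c ((j + p - i * g mod p) mod p)" using assms by simp
  finally show ?thesis .
qed

theorem mainTheorem9:
  fixes p g :: nat and \<beta>1 \<beta>2 :: real and c :: "nat \<Rightarrow> real"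
  assumes "prime p" and "p > 2"
    and "residue_primroot p g"
    and "\<beta>2 > 0"
    and eig: "\<forall>k<p. (\<Sum>l<p. complex_of_real (c l) * cis (2 * pi / p) ^ (k * l))
              = (complex_of_real \<beta>1 # map (\<lambda>m. complex_of_real \<beta>2 * cis (2 * pi / p) ^ m) [1..<p]) ! k"
  shows "g_circulant p g (Qperm p g * circ p c :: real mat) \<and>
         eigenvalues_are (map_mat complex_of_real (Qperm p g * circ p c))
           (complex_of_real \<beta>1 # map (\<lambda>m. complex_of_real \<beta>2 * cis (2 * pi / (p - 1)) ^ m) [0..<p - 1])"
proof -
  interpret P: prim p g using assms by unfold_locales
  define cc where "cc l = complex_of_real (c l)" for l
  have lam0: "(\<Sum>l<p. cc l) = complex_of_real \<beta>1"
    using eig[rule_format, of 0] P.p0 by (simp add: cc_def)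
  have lamk: "(\<Sum>l<p. cc l * rt p (int k * int l)) = complex_of_real \<beta>2 * rt p (int k)"
    if k: "0 < k" "k < p" for k
  proof -
    have "(complex_of_real \<beta>1 # map (\<lambda>m. complex_of_real \<beta>2 * cis (2 * pi / p) ^ m) [1..<p]) ! k
        = complex_of_real \<beta>2 * cis (2 * pi / p) ^ k"
      using k by (cases k) auto
    then show ?thesis using eig[rule_format, OF k(2)] by (simp add: cc_def cis_rt)
  qed
  interpret Q: prim2 p g cc "complex_of_real \<beta>1" "complex_of_real \<beta>2"
    by unfold_locales (use lam0 lamk in auto)
  have carrR: "(Qperm p g * circ p c :: real mat) \<in> carrier_mat p p"
    by (auto simp: Qperm_def circ_def)
  have entR: "(Qperm p g * circ p c :: real mat) $$ (i, j) = c (Q.d i j)" if "i < p" "j < p" for i j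
    using QC_entry[OF P.p0 that, of g c] unfolding Q.d_def by simp
  have gc: "g_circulant p g (Qperm p g * circ p c :: real mat)"
    unfolding g_circulant_def
  proof (intro conjI carrR allI impI)
    fix i j assume ij: "i + 1 < p \<and> j < p"
    have "int (Q.d (i + 1) ((j + g) mod p)) = int (Q.d i j)"
    proof -
      have "int (Q.d (i + 1) ((j + g) mod p)) = ((int j + int g) mod int p - (1 + int i) * int g) mod int p"
        unfolding Q.d_int by (simp add: zmod_int)
      also have "\<dots> = ((int j + int g) - (1 + int i) * int g) mod int p" by (simp add: mod_simps)
      also have "\<dots> = (int j - int i * int g) mod int p" by (simp add: algebra_simps)
      finally show ?thesis unfolding Q.d_int .
    qed
    then have "Q.d (i + 1) ((j + g) mod p) = Q.d i j" by simp
    then show "(Qperm p g * circ p c :: real mat) $$ (i + 1, (j + g) mod p) = (Qperm p g * circ p c :: real mat) $$ (i, j)"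
      using ij entR P.p0 by simp
  qed
  have AmR: "map_mat complex_of_real (Qperm p g * circ p c :: real mat) = Q.Am"
  proof (rule eq_matI)
    have dr: "dim_row (Qperm p g * circ p c :: real mat) = p" "dim_col (Qperm p g * circ p c :: real mat) = p"
      using carrR by auto
    fix i j assume "i < dim_row Q.Am" "j < dim_col Q.Am"
    then have ij: "i < p" "j < p" by (auto simp: Q.Am_def)
    show "map_mat complex_of_real (Qperm p g * circ p c :: real mat) $$ (i, j) = Q.Am $$ (i, j)"
      using index_map_mat(1)[of i "Qperm p g * circ p c :: real mat" j complex_of_real] dr ij entR
      by (simp add: Q.Am_def cc_def)
  qed (auto simp: Q.Am_def Qperm_def circ_def)
  have lst: "map (\<lambda>m. complex_of_real \<beta>2 * cis (2 * pi / (p - 1)) ^ m) [0..<p - 1]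
      = map (\<lambda>m. complex_of_real \<beta>2 * rt (p - 1) (int m)) [0..<p - 1]"
    using cis_rt[of "p - 1"] P.p1 by (simp add: of_nat_diff)
  show ?thesis
    using gc Q.charpoly unfolding eigenvalues_are_def AmR lst by simp
qed


end
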